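(* Let $n_r,n_q\ge 1$ and $N\ge 1$ be integers, let $M_r\in\mathbb{R}^{n_r\times n_r}$ and $M_q\in\mathbb{R}^{n_q\times n_q}$ be symmetric positive definite, let $G_r\in\mathbb{R}^{n_q\times n_r}$ be arbitrary (possibly singular), and let $\gamma_r\in\mathbb{R}^{n_r\times n_r}$, $\gamma_q\in\mathbb{R}^{n_q\times n_q}$ be stiffness coefficients (in particular, positive scalars). Let $r^{\mathrm{in}},s^{\mathrm{in}}\in\mathbb{R}^{n_r}$ and $q^{\mathrm{in}}_1,\dots,q^{\mathrm{in}}_N\in\mathbb{R}^{n_q}$. Suppose $(r(t),Q_1(t),\dots,Q_N(t))$ solves the ODE system $$\Big(M_r+\sum_{i=1}^N G_r^T M_q G_r\Big)\ddot r=-\gamma_r r+\sum_{i=1}^N G_r^T\gamma_q Q_i,\qquad \dot Q_j=-G_r\dot r\quad(j=1,\dots,N),$$ with $r(0)=r^{\mathrm{in}}$, $\dot r(0)=s^{\mathrm{in}}$, $Q_j(0)=q^{\mathrm{in}}_j$. Define $\mu^t:=\frac1N\sum_{j=1}^N\delta_{Q_j(t)}$. Then $(r(t),\mu^t)$ is a solution of the linear partially kinetic system (defined in the context) with $N_{\mathrm{real}}:=N$, initial conditions $r(0)=r^{\mathrm{in}}$, $\dot r(0)=s^{\mathrm{in}}$, and initial measure $\mu^{\mathrm{in}}=\frac1N\sum_{j=1}^N\delta_{q^{\mathrm{in}}_j}$.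
   Context: $\delta_x$ denotes the Dirac measure at $x$. $\mathcal P^1(\mathbb{R}^{n_q})$ is the set of Borel probability measures on $\mathbb{R}^{n_q}$ with finite first moment. For a measurable map $\varphi:\mathbb{R}^{n_q}\to\mathbb{R}^{n_q}$ and a measure $\mu$, the pushforward is $\varphi\#\mu(A):=\mu(\varphi^{-1}(A))$ for Borel sets $A$. Linear partially kinetic system: with $n_r,n_q,M_r,M_q,G_r,\gamma_r,\gamma_q$ as in the claim, a constant $N_{\mathrm{real}}>0$, initial data $r^{\mathrm{in}},s^{\mathrm{in}}\in\mathbb{R}^{n_r}$ and $\mu^{\mathrm{in}}\in\mathcal P^1(\mathbb{R}^{n_q})$, a solution consists of a twice differentiable $r:[0,\infty)\to\mathbb{R}^{n_r}$, a characteristic flow $Q:[0,\infty)\times\mathbb{R}^{n_q}\to\mathbb{R}^{n_q}$ differentiable in $t$, and measures $\mu^t$ such that $$\Big(M_r+N_{\mathrm{real}}\int_{\mathbb{R}^{n_q}}G_r^TM_qG_r\,d\mu^t(q)\Big)\ddot r(t)=-\gamma_r r(t)+N_{\mathrm{real}}G_r^T\gamma_q\int_{\mathbb{R}^{n_q}}q\,d\mu^t(q),$$ $$\partial_t Q(t,q^{\mathrm{in}})=-G_r\dot r(t),\quad Q(0,q^{\mathrm{in}})=q^{\mathrm{in}}\ \text{for all }q^{\mathrm{in}}\in\mathbb{R}^{n_q},\qquad \mu^t=Q(t,\cdot)\#\mu^{\mathrm{in}},$$ with $r(0)=r^{\mathrm{in}}$, $\dot r(0)=s^{\mathrm{in}}$.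 *)

theory Defs
  imports "HOL-Probability.Probability"
begin

definition sym_pos_def :: "real^'n^'n \<Rightarrow> bool" where
  "sym_pos_def M \<longleftrightarrow> transpose M = M \<and> (\<forall>x. x \<noteq> 0 \<longrightarrow> x \<bullet> (M *v x) > 0)"

definition P1 :: "('a::euclidean_space) measure \<Rightarrow> bool" where
  "P1 \<mu> \<longleftrightarrow> prob_space \<mu> \<and> sets \<mu> = sets borel \<and> integrable \<mu> (\<lambda>q. norm q)"

text \<open>Empirical measure (1/N) sum_{j<N} delta_{q j}, realised as the pushforward of the
  uniform probability measure on the index set {..<N} under j |-> q j.\<close>
definition empirical :: "nat \<Rightarrow> (nat \<Rightarrow> 'a::euclidean_space) \<Rightarrow> 'a measure" where
  "empirical N q = distr (uniform_count_measure {..<N}) borel q"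

definition lpk_solution ::
  "real^'r^'r \<Rightarrow> real^'q^'q \<Rightarrow> real^'r^'q \<Rightarrow> real^'r^'r \<Rightarrow> real^'q^'q \<Rightarrow> real
   \<Rightarrow> real^'r \<Rightarrow> real^'r \<Rightarrow> (real^'q) measure
   \<Rightarrow> (real \<Rightarrow> real^'r) \<Rightarrow> (real \<Rightarrow> (real^'q) measure) \<Rightarrow> bool" where
  "lpk_solution Mr Mq Gr gr gq Nreal r_in s_in \<mu>in r \<mu> \<longleftrightarrow>
     P1 \<mu>in \<and>
     (\<exists>r' r'' Q.
        (\<forall>t\<ge>0. (r has_vector_derivative r' t) (at t within {0..})
               \<and> (r' has_vector_derivative r'' t) (at t within {0..})) \<and>
        r 0 = r_in \<and> r' 0 = s_in \<and>
        (\<forall>t\<ge>0. (Mr + Nreal *\<^sub>R integral\<^sup>L (\<mu> t) (\<lambda>q. transpose Gr ** Mq ** Gr)) *v r'' t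
                 = - (gr *v r t) + Nreal *\<^sub>R (transpose Gr *v (gq *v integral\<^sup>L (\<mu> t) (\<lambda>q. q)))) \<and>
        (\<forall>qin. \<forall>t\<ge>0. ((\<lambda>s. Q s qin) has_vector_derivative - (Gr *v r' t)) (at t within {0..})) \<and>
        (\<forall>qin. Q 0 qin = qin) \<and>
        (\<forall>t\<ge>0. Q t \<in> borel_measurable borel \<and> \<mu> t = distr \<mu>in borel (Q t)))"

end

theory Submission
  imports Defs
begin

lemma ucm_meas: "f \<in> measurable (uniform_count_measure A) M \<longleftrightarrow> f \<in> space (uniform_count_measure A) \<rightarrow> space M"
  by (metis measurable_cong_sets measurable_count_space_eq1 sets_uniform_count_measure_count_space space_count_space space_uniform_count_measure)

lemma emp_prob: "N \<ge> 1 \<Longrightarrow> prob_space (empirical N q)"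
  unfolding empirical_def
  by (intro prob_space.prob_space_distr prob_space_uniform_count_measure) (auto simp: ucm_meas lessThan_empty_iff)

lemma emp_int: "N \<ge> 1 \<Longrightarrow> f \<in> borel_measurable borel \<Longrightarrow> integral\<^sup>L (empirical N q) f = (\<Sum>j<N. (1 / real N) *\<^sub>R f (q j))"
  for f :: "'a::euclidean_space \<Rightarrow> 'b::euclidean_space"
  unfolding empirical_def
  apply (subst integral_distr)
  apply (auto simp: ucm_meas uniform_count_measure_def lebesgue_integral_point_measure_finite)
  done

lemma emp_integrable: "N \<ge> 1 \<Longrightarrow> integrable (empirical N q) (\<lambda>x. norm x)"
  unfolding empirical_def
  apply (subst integrable_distr_eq)
  apply (auto simp: ucm_meas)
  apply (rule finite_measure.integrable_const_bound[where B="\<Sum>j<N. norm (q j)"])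
    apply (rule prob_space.axioms(1)[OF prob_space_uniform_count_measure]; simp add: lessThan_empty_iff)
   apply (rule AE_I2)
   apply (simp add: space_uniform_count_measure)
   apply (rule member_le_sum[where f="\<lambda>j. norm (q j)"]; simp)
  apply (simp add: ucm_meas)
  done

lemma emp_P1: "N \<ge> 1 \<Longrightarrow> P1 (empirical N q)"
  unfolding P1_def using emp_prob emp_integrable by (auto simp: empirical_def)

theorem lemma1:
  fixes Mr gr :: "real^'r^'r" and Mq gq :: "real^'q^'q" and Gr :: "real^'r^'q"
    and N :: nat and r_in s_in :: "real^'r" and qin :: "nat \<Rightarrow> real^'q"
    and r r' r'' :: "real \<Rightarrow> real^'r" and Q :: "nat \<Rightarrow> real \<Rightarrow> real^'q"
  assumes "N \<ge> 1"
    and "sym_pos_def Mr" and "sym_pos_def Mq"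
    and "\<exists>c>0. gr = c *\<^sub>R mat 1" and "\<exists>c>0. gq = c *\<^sub>R mat 1"
    and "\<forall>t\<ge>0. (r has_vector_derivative r' t) (at t within {0..})
              \<and> (r' has_vector_derivative r'' t) (at t within {0..})"
    and "\<forall>t\<ge>0. (Mr + (\<Sum>i<N. transpose Gr ** Mq ** Gr)) *v r'' t
               = - (gr *v r t) + (\<Sum>i<N. transpose Gr *v (gq *v Q i t))"
    and "\<forall>j<N. \<forall>t\<ge>0. (Q j has_vector_derivative - (Gr *v r' t)) (at t within {0..})"
    and "r 0 = r_in" and "r' 0 = s_in" and "\<forall>j<N. Q j 0 = qin j"
  shows "lpk_solution Mr Mq Gr gr gq (real N) r_in s_in (empirical N qin) r
           (\<lambda>t. empirical N (\<lambda>j. Q j t))"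
proof -
  have N0: "real N > 0" using assms(1) by simp
  have hr: "\<And>t. t \<ge> 0 \<Longrightarrow> (r has_vector_derivative r' t) (at t within {0..})" using assms(6) by blast
  have Qeq: "Q j t = qin j - Gr *v (r t - r_in)" if j: "j < N" and t: "t \<ge> 0" for j t
  proof -
    have "\<And>x. x \<in> {0::real..} \<Longrightarrow> ((\<lambda>s. Q j s + Gr *v r s) has_vector_derivative 0) (at x within {0..})"
    proof -
      fix x :: real assume "x \<in> {0..}"
      hence x: "x \<ge> 0" by simp
      have "((\<lambda>s. Q j s + Gr *v r s) has_vector_derivative (- (Gr *v r' x) + Gr *v r' x)) (at x within {0..})"
        apply (rule has_vector_derivative_add)
        using assms(8) j x apply blast
        by (rule bounded_linear.has_vector_derivative[OF matrix_vector_mul_bounded_linear hr[OF x]])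
      thus "((\<lambda>s. Q j s + Gr *v r s) has_vector_derivative 0) (at x within {0..})" by simp
    qed
    then obtain c where c: "\<And>x. x \<in> {0::real..} \<Longrightarrow> Q j x + Gr *v r x = c"
      using has_vector_derivative_zero_constant[OF convex_real_interval(1)] by blast
    have "Q j t + Gr *v r t = Q j 0 + Gr *v r 0" using c[of t] c[of 0] t by simp
    thus ?thesis using assms(9,11) j by (simp add: matrix_vector_mult_diff_distrib algebra_simps)
  qed
  define Qf where "Qf = (\<lambda>t (q::real^'q). q - Gr *v (r t - r_in))"
  have Qfm: "Qf t \<in> borel_measurable borel" for t unfolding Qf_def by measurable
  have ints: "integral\<^sup>L (empirical N (\<lambda>j. Q j t)) (\<lambda>q. C) = C" for t and C :: "real^'r^'r"
    using prob_space.prob_space[OF emp_prob[OF assms(1), of "\<lambda>j. Q j t"]] by simp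
  have intq: "real N *\<^sub>R integral\<^sup>L (empirical N (\<lambda>j. Q j t)) (\<lambda>q. q) = (\<Sum>j<N. Q j t)" for t
    using N0 assms(1) by (simp add: emp_int scaleR_sum_right)
  have lin: "(\<Sum>i<N. transpose Gr *v (gq *v Q i t)) = transpose Gr *v (gq *v (\<Sum>i<N. Q i t))" for t
    by (simp add: linear_sum[OF matrix_vector_mul_linear] comp_def)
  have F1: "P1 (empirical N qin)" using emp_P1 assms(1) .
  have F2: "(Mr + real N *\<^sub>R integral\<^sup>L (empirical N (\<lambda>j. Q j t)) (\<lambda>q. transpose Gr ** Mq ** Gr)) *v r'' t =
          - (gr *v r t) + real N *\<^sub>R (transpose Gr *v (gq *v integral\<^sup>L (empirical N (\<lambda>j. Q j t)) (\<lambda>q. q)))"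
    if t: "t \<ge> 0" for t
    proof -
      have e1: "real N *\<^sub>R integral\<^sup>L (empirical N (\<lambda>j. Q j t)) (\<lambda>q. transpose Gr ** Mq ** Gr)
                = (\<Sum>i<N. transpose Gr ** Mq ** Gr)"
        by (simp only: ints sum_constant_scaleR card_lessThan)
      have e2: "real N *\<^sub>R (transpose Gr *v (gq *v integral\<^sup>L (empirical N (\<lambda>j. Q j t)) (\<lambda>q. q)))
                = (\<Sum>i<N. transpose Gr *v (gq *v Q i t))"
        unfolding lin intq[symmetric] by (simp only: matrix_vector_mult_scaleR)
      show ?thesis unfolding e1 e2 using assms(7) t by blast
    qed
  have F3: "((\<lambda>s. Qf s qin') has_vector_derivative - (Gr *v r' t)) (at t within {0..})"
    if t: "t \<ge> 0" for qin' t
      unfolding Qf_def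
      using has_vector_derivative_diff[OF has_vector_derivative_const[of qin'] 
            bounded_linear.has_vector_derivative[OF matrix_vector_mul_bounded_linear[of Gr]
              has_vector_derivative_diff[OF hr[OF t] has_vector_derivative_const[of r_in]]]]
      by simp
  have F4: "Qf 0 qin' = qin'" for qin' unfolding Qf_def using assms(9) by simp
  have F5: "empirical N (\<lambda>j. Q j t) = distr (empirical N qin) borel (Qf t)" if t: "t \<ge> 0" for t
      unfolding empirical_def
      apply (subst distr_distr)
        apply (rule Qfm)
       apply (simp add: ucm_meas)
      apply (rule distr_cong)
        apply simp
       apply simp
      apply (simp add: space_uniform_count_measure Qf_def Qeq t)
      done
  show ?thesis
    unfolding lpk_solution_def
    apply (rule conjI, rule F1)
    apply (rule exI[of _ r'], rule exI[of _ r''], rule exI[of _ Qf])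
    apply (intro conjI)
          apply (rule assms(6))
         apply (rule assms(9))
        apply (rule assms(10))
       apply (intro allI impI, erule F2)
      apply (intro allI impI, erule F3)
     apply (intro allI, rule F4)
    apply (intro allI impI conjI, rule Qfm, erule F5)
    done
qed

end
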